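(* Let $\rho$ be a two-qubit state on $\mathbb{C}^2\otimes\mathbb{C}^2$ whose correlation matrix $T$ is diagonal. If $d_{\max}(\rho)>1/\sqrt2$, then $M(\rho)>1$. The converse does not hold: there exist two-qubit states $\rho$ with diagonal correlation matrix such that $M(\rho)>1$ but $d_{\max}(\rho)\leq 1/\sqrt2$.
   Context: Let $\sigma_0,\sigma_1,\sigma_2$ be the Pauli matrices $X,Y,Z$. Every two-qubit state can be written as $\rho=\frac14\big(I\otimes I+\sum_i r^A_i\sigma_i\otimes I+\sum_j r^B_j I\otimes\sigma_j+\sum_{i,j}T_{ij}\sigma_i\otimes\sigma_j\big)$, with $r^A_i=\mathrm{Tr}(\sigma_i\rho_A)$, $r^B_j=\mathrm{Tr}(\sigma_j\rho_B)$ and real correlation matrix $T_{ij}=\mathrm{Tr}((\sigma_i\otimes\sigma_j)\rho)$. Define $M(\rho)=\tau_1+\tau_2$, the sum of the two largest eigenvalues of $T^TT$. A unitary $U^B$ on $\mathbb{C}^2$ is called cyclic for $\rho$ if $[\rho_B,U^B]=0$, where $\rho_B=\mathrm{Tr}_A\rho$. Set $\rho_f=(I\otimes U^B)\rho(I\otimes U^{B\dagger})$, define $d(\rho,U^B)=\frac{1}{\sqrt2}\|\rho-\rho_f\|_F$ (Frobenius norm), and $d_{\max}(\rho)=\max\{d(\rho,U^B): U^B\text{ unitary},\ [\rho_B,U^B]=0\}$. *)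

theory Defs
  imports "Jordan_Normal_Form.Char_Poly"
begin

(* Pauli matrices sigma_0 = X, sigma_1 = Y, sigma_2 = Z, basis |0>,|1> *)
definition pauli :: "nat \<Rightarrow> complex mat" where
  "pauli k = (if k = 0 then mat_of_rows_list 2 [[0, 1], [1, 0]]
              else if k = 1 then mat_of_rows_list 2 [[0, -\<i>], [\<i>, 0]]
              else mat_of_rows_list 2 [[1, 0], [0, -1]])"

definition cadj :: "complex mat \<Rightarrow> complex mat" where
  "cadj A = mat (dim_col A) (dim_row A) (\<lambda>(i, j). cnj (A $$ (j, i)))"

definition mtrace :: "complex mat \<Rightarrow> complex" where
  "mtrace A = (\<Sum>i<dim_row A. A $$ (i, i))"

(* Kronecker product of 2x2 matrices; basis |a> \<otimes> |b> is index 2*a+b *)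
definition kron2 :: "complex mat \<Rightarrow> complex mat \<Rightarrow> complex mat" where
  "kron2 A B = mat 4 4 (\<lambda>(i, j). A $$ (i div 2, j div 2) * B $$ (i mod 2, j mod 2))"

definition two_qubit_state :: "complex mat \<Rightarrow> bool" where
  "two_qubit_state \<rho> \<longleftrightarrow> \<rho> \<in> carrier_mat 4 4 \<and> cadj \<rho> = \<rho> \<and>
     (\<forall>v \<in> carrier_vec 4. 0 \<le> Re (conjugate v \<bullet> (\<rho> *\<^sub>v v))) \<and> mtrace \<rho> = 1"

definition ptrace_A :: "complex mat \<Rightarrow> complex mat" where
  "ptrace_A \<rho> = mat 2 2 (\<lambda>(b, b'). \<Sum>a<2. \<rho> $$ (2 * a + b, 2 * a + b'))"

definition corr_mat :: "complex mat \<Rightarrow> real mat" where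
  "corr_mat \<rho> = mat 3 3 (\<lambda>(i, j). Re (mtrace (kron2 (pauli i) (pauli j) * \<rho>)))"

definition is_diagonal :: "real mat \<Rightarrow> bool" where
  "is_diagonal A \<longleftrightarrow> (\<forall>i < dim_row A. \<forall>j < dim_col A. i \<noteq> j \<longrightarrow> A $$ (i, j) = 0)"

definition eigs_desc :: "real mat \<Rightarrow> real list" where
  "eigs_desc A = rev (sorted_list_of_multiset (proots (char_poly A)))"

definition M_val :: "complex mat \<Rightarrow> real" where
  "M_val \<rho> = (let T = corr_mat \<rho>; ev = eigs_desc (transpose_mat T * T) in ev ! 0 + ev ! 1)"

definition unitary2 :: "complex mat \<Rightarrow> bool" where
  "unitary2 U \<longleftrightarrow> U \<in> carrier_mat 2 2 \<and> U * cadj U = 1\<^sub>m 2"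

definition frob_norm :: "complex mat \<Rightarrow> real" where
  "frob_norm A = sqrt (\<Sum>i<dim_row A. \<Sum>j<dim_col A. (cmod (A $$ (i, j)))\<^sup>2)"

definition rho_f :: "complex mat \<Rightarrow> complex mat \<Rightarrow> complex mat" where
  "rho_f \<rho> U = kron2 (1\<^sub>m 2) U * \<rho> * kron2 (1\<^sub>m 2) (cadj U)"

definition dist_cyc :: "complex mat \<Rightarrow> complex mat \<Rightarrow> real" where
  "dist_cyc \<rho> U = frob_norm (\<rho> - rho_f \<rho> U) / sqrt 2"

definition d_max :: "complex mat \<Rightarrow> real" where
  "d_max \<rho> = Sup {dist_cyc \<rho> U | U. unitary2 U \<and> ptrace_A \<rho> * U = U * ptrace_A \<rho>}"

end

theory Submission
  imports Defs
begin


lemma sorted3_sum: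
  fixes u v w :: real
  assumes "sorted L" "mset L = {#u, v, w#}"
  shows "rev L ! 0 + rev L ! 1 = u + v + w - min u (min v w)"
proof -
  have len: "length L = 3" using assms(2) by (metis size_mset size_add_mset size_empty numeral_3_eq_3 One_nat_def)
  then obtain l0 l1 l2 where L: "L = [l0, l1, l2]"
    by (cases L; cases "tl L"; cases "tl (tl L)") (auto simp: numeral_3_eq_3)
  have s: "l0 \<le> l1" "l1 \<le> l2" using assms(1) L by auto
  have m: "{#l0, l1, l2#} = {#u, v, w#}" using assms(2) L by simp
  hence sets: "{l0,l1,l2} = {u,v,w}" by (metis set_mset_add_mset_insert set_mset_empty)
  have sum: "l0 + l1 + l2 = u + v + w"
    using arg_cong[OF m, of sum_mset] by (simp add: algebra_simps)
  have "l0 = min u (min v w)"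
  proof -
    have "u \<in> {l0,l1,l2}" "v \<in> {l0,l1,l2}" "w \<in> {l0,l1,l2}" "l0 \<in> {u,v,w}" using sets by auto
    thus ?thesis using s by auto
  qed
  thus ?thesis using L sum by simp
qed

lemma proots3: "proots (\<Prod>a\<leftarrow>[u,v,w::real]. [:- a, 1:]) = {#u, v, w#}"
proof -
  have "(\<Prod>a\<leftarrow>[u,v,w::real]. [:- a, 1:]) = [:- u, 1:] * ([:- v, 1:] * [:- w, 1:])" by simp
  also have "proots \<dots> = {#u, v, w#}"
    by (subst proots_mult, simp, simp add: mult_eq_0_iff, subst proots_mult, simp_all)
  finally show ?thesis .
qed

lemma M_val_diag:
  assumes "is_diagonal (corr_mat \<rho>)"
  shows "M_val \<rho> = (corr_mat \<rho> $$ (0,0))^2 + (corr_mat \<rho> $$ (1,1))^2 + (corr_mat \<rho> $$ (2,2))^2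
     - min ((corr_mat \<rho> $$ (0,0))^2) (min ((corr_mat \<rho> $$ (1,1))^2) ((corr_mat \<rho> $$ (2,2))^2))"
proof -
  define T where "T = corr_mat \<rho>"
  have T: "T \<in> carrier_mat 3 3" unfolding T_def corr_mat_def by simp
  have dg: "\<And>i j. i < 3 \<Longrightarrow> j < 3 \<Longrightarrow> i \<noteq> j \<Longrightarrow> T $$ (i,j) = 0"
    using assms T unfolding T_def[symmetric] is_diagonal_def by auto
  define A where "A = transpose_mat T * T"
  have A: "A \<in> carrier_mat 3 3" unfolding A_def using T by simp
  have s3: "\<And>f :: nat \<Rightarrow> real. (\<Sum>k<3. f k) = f 0 + f 1 + f 2" by (simp add: eval_nat_numeral)
  have Aij: "A $$ (i,j) = (if i = j then (T $$ (i,i))^2 else 0)" if "i < 3" "j < 3" for i j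
  proof -
    have "A $$ (i,j) = (\<Sum>k<3. T $$ (k,i) * T $$ (k,j))"
      unfolding A_def using T that by (simp add: scalar_prod_def atLeast0LessThan mult.commute)
    also have "\<dots> = (if i = j then (T $$ (i,i))^2 else 0)"
    proof -
      have "i = 0 \<or> i = 1 \<or> i = 2" "j = 0 \<or> j = 1 \<or> j = 2" using that by auto
      thus ?thesis unfolding s3 using dg by (auto simp: power2_eq_square)
    qed
    finally show ?thesis .
  qed
  have ut: "upper_triangular A" unfolding upper_triangular_def using A Aij by auto
  have cp: "char_poly A = (\<Prod>a\<leftarrow>diag_mat A. [:- a, 1:])"
    using char_poly_upper_triangular[OF A ut] .
  have dm: "diag_mat A = [(T $$ (0,0))^2, (T $$ (1,1))^2, (T $$ (2,2))^2]"
    unfolding diag_mat_def using A Aij by (simp add: upt_rec numeral_2_eq_2)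
  have pr: "proots (char_poly A) = {#(T $$ (0,0))^2, (T $$ (1,1))^2, (T $$ (2,2))^2#}"
    unfolding cp dm by (rule proots3)
  show ?thesis
    unfolding M_val_def Let_def eigs_desc_def T_def[symmetric] A_def[symmetric] pr
    by (rule sorted3_sum) auto
qed
definition um :: "complex \<Rightarrow> complex \<Rightarrow> complex \<Rightarrow> complex \<Rightarrow> nat \<Rightarrow> nat \<Rightarrow> complex" where
  "um a b c d k l = [[a,b],[c,d]] ! k ! l"

definition Rm :: "complex \<Rightarrow> complex \<Rightarrow> real \<Rightarrow> real \<Rightarrow> real \<Rightarrow> real \<Rightarrow> real \<Rightarrow> real \<Rightarrow> nat \<Rightarrow> nat \<Rightarrow> complex" where
  "Rm z w x y p0 p1 p2 p3 i j = [[of_real p0, z, w, of_real x],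
     [cnj z, of_real p1, of_real y, w],
     [cnj w, of_real y, of_real p2, z],
     [of_real x, cnj w, cnj z, of_real p3]] ! i ! j"

definition Wm :: "real \<Rightarrow> real \<Rightarrow> real \<Rightarrow> nat \<Rightarrow> nat \<Rightarrow> complex" where
  "Wm x y t i j = [[of_real (t/4), 0, 0, of_real x],
     [0, of_real (-t/4), of_real y, 0],
     [0, of_real y, of_real (-t/4), 0],
     [of_real x, 0, 0, of_real (t/4)]] ! i ! j"

definition csf :: "(nat \<Rightarrow> nat \<Rightarrow> complex) \<Rightarrow> (nat \<Rightarrow> nat \<Rightarrow> complex) \<Rightarrow> nat \<Rightarrow> nat \<Rightarrow> complex" where
  "csf u R i j = (\<Sum>k<2. \<Sum>l<2. u (i mod 2) k * R (2*(i div 2)+k) (2*(j div 2)+l) * cnj (u (j mod 2) l))"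

lemma sum2: "(\<Sum>k<(2::nat). f k) = f 0 + f 1" by (simp add: eval_nat_numeral)
lemma sum4: "(\<Sum>k<(4::nat). f k) = f 0 + f 1 + f 2 + f 3" by (simp add: eval_nat_numeral)

lemma t00:
  fixes a b c d z w :: complex and x y p0 p1 p2 p3 :: real
  assumes u1: "a*cnj a + b*cnj b = 1" and u2: "a*cnj c + b*cnj d = 0"
    and u3: "c*cnj a + d*cnj b = 0" and u4: "c*cnj c + d*cnj d = 1"
    and c1: "(of_real p0 + of_real p2) * a + 2*z*c = a * (of_real p0 + of_real p2) + b*(2*cnj z)"
    and c2: "(of_real p0 + of_real p2) * b + 2*z*d = a*(2*z) + b * (of_real p1 + of_real p3)"
    and c3: "2*cnj z * a + (of_real p1 + of_real p3) * c = c * (of_real p0 + of_real p2) + d*(2*cnj z)"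
    and c4: "2*cnj z * b + (of_real p1 + of_real p3) * d = c * (2*z) + d * (of_real p1 + of_real p3)"
  shows "Rm z w x y p0 p1 p2 p3 0 0 - csf (um a b c d) (Rm z w x y p0 p1 p2 p3) 0 0
       = Wm x y (p0-p1-p2+p3) 0 0 - csf (um a b c d) (Wm x y (p0-p1-p2+p3)) 0 0"
  by (simp add: csf_def sum2 Rm_def Wm_def um_def, (insert u1 u2 u3 u4 c1 c2 c3 c4, Groebner_Basis.algebra)?)

lemma t01:
  fixes a b c d z w :: complex and x y p0 p1 p2 p3 :: real
  assumes u1: "a*cnj a + b*cnj b = 1" and u2: "a*cnj c + b*cnj d = 0"
    and u3: "c*cnj a + d*cnj b = 0" and u4: "c*cnj c + d*cnj d = 1"
    and c1: "(of_real p0 + of_real p2) * a + 2*z*c = a * (of_real p0 + of_real p2) + b*(2*cnj z)"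
    and c2: "(of_real p0 + of_real p2) * b + 2*z*d = a*(2*z) + b * (of_real p1 + of_real p3)"
    and c3: "2*cnj z * a + (of_real p1 + of_real p3) * c = c * (of_real p0 + of_real p2) + d*(2*cnj z)"
    and c4: "2*cnj z * b + (of_real p1 + of_real p3) * d = c * (2*z) + d * (of_real p1 + of_real p3)"
  shows "Rm z w x y p0 p1 p2 p3 0 1 - csf (um a b c d) (Rm z w x y p0 p1 p2 p3) 0 1
       = Wm x y (p0-p1-p2+p3) 0 1 - csf (um a b c d) (Wm x y (p0-p1-p2+p3)) 0 1"
  by (simp add: csf_def sum2 Rm_def Wm_def um_def, (insert u1 u2 u3 u4 c1 c2 c3 c4, Groebner_Basis.algebra)?)

lemma t02:
  fixes a b c d z w :: complex and x y p0 p1 p2 p3 :: real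
  assumes u1: "a*cnj a + b*cnj b = 1" and u2: "a*cnj c + b*cnj d = 0"
    and u3: "c*cnj a + d*cnj b = 0" and u4: "c*cnj c + d*cnj d = 1"
    and c1: "(of_real p0 + of_real p2) * a + 2*z*c = a * (of_real p0 + of_real p2) + b*(2*cnj z)"
    and c2: "(of_real p0 + of_real p2) * b + 2*z*d = a*(2*z) + b * (of_real p1 + of_real p3)"
    and c3: "2*cnj z * a + (of_real p1 + of_real p3) * c = c * (of_real p0 + of_real p2) + d*(2*cnj z)"
    and c4: "2*cnj z * b + (of_real p1 + of_real p3) * d = c * (2*z) + d * (of_real p1 + of_real p3)"
  shows "Rm z w x y p0 p1 p2 p3 0 2 - csf (um a b c d) (Rm z w x y p0 p1 p2 p3) 0 2
       = Wm x y (p0-p1-p2+p3) 0 2 - csf (um a b c d) (Wm x y (p0-p1-p2+p3)) 0 2"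
  by (simp add: csf_def sum2 Rm_def Wm_def um_def, (insert u1 u2 u3 u4 c1 c2 c3 c4, Groebner_Basis.algebra)?)

lemma t03:
  fixes a b c d z w :: complex and x y p0 p1 p2 p3 :: real
  assumes u1: "a*cnj a + b*cnj b = 1" and u2: "a*cnj c + b*cnj d = 0"
    and u3: "c*cnj a + d*cnj b = 0" and u4: "c*cnj c + d*cnj d = 1"
    and c1: "(of_real p0 + of_real p2) * a + 2*z*c = a * (of_real p0 + of_real p2) + b*(2*cnj z)"
    and c2: "(of_real p0 + of_real p2) * b + 2*z*d = a*(2*z) + b * (of_real p1 + of_real p3)"
    and c3: "2*cnj z * a + (of_real p1 + of_real p3) * c = c * (of_real p0 + of_real p2) + d*(2*cnj z)"
    and c4: "2*cnj z * b + (of_real p1 + of_real p3) * d = c * (2*z) + d * (of_real p1 + of_real p3)"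
  shows "Rm z w x y p0 p1 p2 p3 0 3 - csf (um a b c d) (Rm z w x y p0 p1 p2 p3) 0 3
       = Wm x y (p0-p1-p2+p3) 0 3 - csf (um a b c d) (Wm x y (p0-p1-p2+p3)) 0 3"
  by (simp add: csf_def sum2 Rm_def Wm_def um_def, (insert u1 u2 u3 u4 c1 c2 c3 c4, Groebner_Basis.algebra)?)

lemma t10:
  fixes a b c d z w :: complex and x y p0 p1 p2 p3 :: real
  assumes u1: "a*cnj a + b*cnj b = 1" and u2: "a*cnj c + b*cnj d = 0"
    and u3: "c*cnj a + d*cnj b = 0" and u4: "c*cnj c + d*cnj d = 1"
    and c1: "(of_real p0 + of_real p2) * a + 2*z*c = a * (of_real p0 + of_real p2) + b*(2*cnj z)"
    and c2: "(of_real p0 + of_real p2) * b + 2*z*d = a*(2*z) + b * (of_real p1 + of_real p3)"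
    and c3: "2*cnj z * a + (of_real p1 + of_real p3) * c = c * (of_real p0 + of_real p2) + d*(2*cnj z)"
    and c4: "2*cnj z * b + (of_real p1 + of_real p3) * d = c * (2*z) + d * (of_real p1 + of_real p3)"
  shows "Rm z w x y p0 p1 p2 p3 1 0 - csf (um a b c d) (Rm z w x y p0 p1 p2 p3) 1 0
       = Wm x y (p0-p1-p2+p3) 1 0 - csf (um a b c d) (Wm x y (p0-p1-p2+p3)) 1 0"
  by (simp add: csf_def sum2 Rm_def Wm_def um_def, (insert u1 u2 u3 u4 c1 c2 c3 c4, Groebner_Basis.algebra)?)

lemma t11:
  fixes a b c d z w :: complex and x y p0 p1 p2 p3 :: real
  assumes u1: "a*cnj a + b*cnj b = 1" and u2: "a*cnj c + b*cnj d = 0"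
    and u3: "c*cnj a + d*cnj b = 0" and u4: "c*cnj c + d*cnj d = 1"
    and c1: "(of_real p0 + of_real p2) * a + 2*z*c = a * (of_real p0 + of_real p2) + b*(2*cnj z)"
    and c2: "(of_real p0 + of_real p2) * b + 2*z*d = a*(2*z) + b * (of_real p1 + of_real p3)"
    and c3: "2*cnj z * a + (of_real p1 + of_real p3) * c = c * (of_real p0 + of_real p2) + d*(2*cnj z)"
    and c4: "2*cnj z * b + (of_real p1 + of_real p3) * d = c * (2*z) + d * (of_real p1 + of_real p3)"
  shows "Rm z w x y p0 p1 p2 p3 1 1 - csf (um a b c d) (Rm z w x y p0 p1 p2 p3) 1 1
       = Wm x y (p0-p1-p2+p3) 1 1 - csf (um a b c d) (Wm x y (p0-p1-p2+p3)) 1 1"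
  by (simp add: csf_def sum2 Rm_def Wm_def um_def, (insert u1 u2 u3 u4 c1 c2 c3 c4, Groebner_Basis.algebra)?)

lemma t12:
  fixes a b c d z w :: complex and x y p0 p1 p2 p3 :: real
  assumes u1: "a*cnj a + b*cnj b = 1" and u2: "a*cnj c + b*cnj d = 0"
    and u3: "c*cnj a + d*cnj b = 0" and u4: "c*cnj c + d*cnj d = 1"
    and c1: "(of_real p0 + of_real p2) * a + 2*z*c = a * (of_real p0 + of_real p2) + b*(2*cnj z)"
    and c2: "(of_real p0 + of_real p2) * b + 2*z*d = a*(2*z) + b * (of_real p1 + of_real p3)"
    and c3: "2*cnj z * a + (of_real p1 + of_real p3) * c = c * (of_real p0 + of_real p2) + d*(2*cnj z)"
    and c4: "2*cnj z * b + (of_real p1 + of_real p3) * d = c * (2*z) + d * (of_real p1 + of_real p3)"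
  shows "Rm z w x y p0 p1 p2 p3 1 2 - csf (um a b c d) (Rm z w x y p0 p1 p2 p3) 1 2
       = Wm x y (p0-p1-p2+p3) 1 2 - csf (um a b c d) (Wm x y (p0-p1-p2+p3)) 1 2"
  by (simp add: csf_def sum2 Rm_def Wm_def um_def, (insert u1 u2 u3 u4 c1 c2 c3 c4, Groebner_Basis.algebra)?)

lemma t13:
  fixes a b c d z w :: complex and x y p0 p1 p2 p3 :: real
  assumes u1: "a*cnj a + b*cnj b = 1" and u2: "a*cnj c + b*cnj d = 0"
    and u3: "c*cnj a + d*cnj b = 0" and u4: "c*cnj c + d*cnj d = 1"
    and c1: "(of_real p0 + of_real p2) * a + 2*z*c = a * (of_real p0 + of_real p2) + b*(2*cnj z)"
    and c2: "(of_real p0 + of_real p2) * b + 2*z*d = a*(2*z) + b * (of_real p1 + of_real p3)"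
    and c3: "2*cnj z * a + (of_real p1 + of_real p3) * c = c * (of_real p0 + of_real p2) + d*(2*cnj z)"
    and c4: "2*cnj z * b + (of_real p1 + of_real p3) * d = c * (2*z) + d * (of_real p1 + of_real p3)"
  shows "Rm z w x y p0 p1 p2 p3 1 3 - csf (um a b c d) (Rm z w x y p0 p1 p2 p3) 1 3
       = Wm x y (p0-p1-p2+p3) 1 3 - csf (um a b c d) (Wm x y (p0-p1-p2+p3)) 1 3"
  by (simp add: csf_def sum2 Rm_def Wm_def um_def, (insert u1 u2 u3 u4 c1 c2 c3 c4, Groebner_Basis.algebra)?)

lemma t20:
  fixes a b c d z w :: complex and x y p0 p1 p2 p3 :: real
  assumes u1: "a*cnj a + b*cnj b = 1" and u2: "a*cnj c + b*cnj d = 0"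
    and u3: "c*cnj a + d*cnj b = 0" and u4: "c*cnj c + d*cnj d = 1"
    and c1: "(of_real p0 + of_real p2) * a + 2*z*c = a * (of_real p0 + of_real p2) + b*(2*cnj z)"
    and c2: "(of_real p0 + of_real p2) * b + 2*z*d = a*(2*z) + b * (of_real p1 + of_real p3)"
    and c3: "2*cnj z * a + (of_real p1 + of_real p3) * c = c * (of_real p0 + of_real p2) + d*(2*cnj z)"
    and c4: "2*cnj z * b + (of_real p1 + of_real p3) * d = c * (2*z) + d * (of_real p1 + of_real p3)"
  shows "Rm z w x y p0 p1 p2 p3 2 0 - csf (um a b c d) (Rm z w x y p0 p1 p2 p3) 2 0
       = Wm x y (p0-p1-p2+p3) 2 0 - csf (um a b c d) (Wm x y (p0-p1-p2+p3)) 2 0"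
  by (simp add: csf_def sum2 Rm_def Wm_def um_def, (insert u1 u2 u3 u4 c1 c2 c3 c4, Groebner_Basis.algebra)?)

lemma t21:
  fixes a b c d z w :: complex and x y p0 p1 p2 p3 :: real
  assumes u1: "a*cnj a + b*cnj b = 1" and u2: "a*cnj c + b*cnj d = 0"
    and u3: "c*cnj a + d*cnj b = 0" and u4: "c*cnj c + d*cnj d = 1"
    and c1: "(of_real p0 + of_real p2) * a + 2*z*c = a * (of_real p0 + of_real p2) + b*(2*cnj z)"
    and c2: "(of_real p0 + of_real p2) * b + 2*z*d = a*(2*z) + b * (of_real p1 + of_real p3)"
    and c3: "2*cnj z * a + (of_real p1 + of_real p3) * c = c * (of_real p0 + of_real p2) + d*(2*cnj z)"
    and c4: "2*cnj z * b + (of_real p1 + of_real p3) * d = c * (2*z) + d * (of_real p1 + of_real p3)"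
  shows "Rm z w x y p0 p1 p2 p3 2 1 - csf (um a b c d) (Rm z w x y p0 p1 p2 p3) 2 1
       = Wm x y (p0-p1-p2+p3) 2 1 - csf (um a b c d) (Wm x y (p0-p1-p2+p3)) 2 1"
  by (simp add: csf_def sum2 Rm_def Wm_def um_def, (insert u1 u2 u3 u4 c1 c2 c3 c4, Groebner_Basis.algebra)?)

lemma t22:
  fixes a b c d z w :: complex and x y p0 p1 p2 p3 :: real
  assumes u1: "a*cnj a + b*cnj b = 1" and u2: "a*cnj c + b*cnj d = 0"
    and u3: "c*cnj a + d*cnj b = 0" and u4: "c*cnj c + d*cnj d = 1"
    and c1: "(of_real p0 + of_real p2) * a + 2*z*c = a * (of_real p0 + of_real p2) + b*(2*cnj z)"
    and c2: "(of_real p0 + of_real p2) * b + 2*z*d = a*(2*z) + b * (of_real p1 + of_real p3)"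
    and c3: "2*cnj z * a + (of_real p1 + of_real p3) * c = c * (of_real p0 + of_real p2) + d*(2*cnj z)"
    and c4: "2*cnj z * b + (of_real p1 + of_real p3) * d = c * (2*z) + d * (of_real p1 + of_real p3)"
  shows "Rm z w x y p0 p1 p2 p3 2 2 - csf (um a b c d) (Rm z w x y p0 p1 p2 p3) 2 2
       = Wm x y (p0-p1-p2+p3) 2 2 - csf (um a b c d) (Wm x y (p0-p1-p2+p3)) 2 2"
  by (simp add: csf_def sum2 Rm_def Wm_def um_def, (insert u1 u2 u3 u4 c1 c2 c3 c4, Groebner_Basis.algebra)?)

lemma t23:
  fixes a b c d z w :: complex and x y p0 p1 p2 p3 :: real
  assumes u1: "a*cnj a + b*cnj b = 1" and u2: "a*cnj c + b*cnj d = 0"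
    and u3: "c*cnj a + d*cnj b = 0" and u4: "c*cnj c + d*cnj d = 1"
    and c1: "(of_real p0 + of_real p2) * a + 2*z*c = a * (of_real p0 + of_real p2) + b*(2*cnj z)"
    and c2: "(of_real p0 + of_real p2) * b + 2*z*d = a*(2*z) + b * (of_real p1 + of_real p3)"
    and c3: "2*cnj z * a + (of_real p1 + of_real p3) * c = c * (of_real p0 + of_real p2) + d*(2*cnj z)"
    and c4: "2*cnj z * b + (of_real p1 + of_real p3) * d = c * (2*z) + d * (of_real p1 + of_real p3)"
  shows "Rm z w x y p0 p1 p2 p3 2 3 - csf (um a b c d) (Rm z w x y p0 p1 p2 p3) 2 3
       = Wm x y (p0-p1-p2+p3) 2 3 - csf (um a b c d) (Wm x y (p0-p1-p2+p3)) 2 3"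
  by (simp add: csf_def sum2 Rm_def Wm_def um_def, (insert u1 u2 u3 u4 c1 c2 c3 c4, Groebner_Basis.algebra)?)

lemma t30:
  fixes a b c d z w :: complex and x y p0 p1 p2 p3 :: real
  assumes u1: "a*cnj a + b*cnj b = 1" and u2: "a*cnj c + b*cnj d = 0"
    and u3: "c*cnj a + d*cnj b = 0" and u4: "c*cnj c + d*cnj d = 1"
    and c1: "(of_real p0 + of_real p2) * a + 2*z*c = a * (of_real p0 + of_real p2) + b*(2*cnj z)"
    and c2: "(of_real p0 + of_real p2) * b + 2*z*d = a*(2*z) + b * (of_real p1 + of_real p3)"
    and c3: "2*cnj z * a + (of_real p1 + of_real p3) * c = c * (of_real p0 + of_real p2) + d*(2*cnj z)"
    and c4: "2*cnj z * b + (of_real p1 + of_real p3) * d = c * (2*z) + d * (of_real p1 + of_real p3)"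
  shows "Rm z w x y p0 p1 p2 p3 3 0 - csf (um a b c d) (Rm z w x y p0 p1 p2 p3) 3 0
       = Wm x y (p0-p1-p2+p3) 3 0 - csf (um a b c d) (Wm x y (p0-p1-p2+p3)) 3 0"
  by (simp add: csf_def sum2 Rm_def Wm_def um_def, (insert u1 u2 u3 u4 c1 c2 c3 c4, Groebner_Basis.algebra)?)

lemma t31:
  fixes a b c d z w :: complex and x y p0 p1 p2 p3 :: real
  assumes u1: "a*cnj a + b*cnj b = 1" and u2: "a*cnj c + b*cnj d = 0"
    and u3: "c*cnj a + d*cnj b = 0" and u4: "c*cnj c + d*cnj d = 1"
    and c1: "(of_real p0 + of_real p2) * a + 2*z*c = a * (of_real p0 + of_real p2) + b*(2*cnj z)"
    and c2: "(of_real p0 + of_real p2) * b + 2*z*d = a*(2*z) + b * (of_real p1 + of_real p3)"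
    and c3: "2*cnj z * a + (of_real p1 + of_real p3) * c = c * (of_real p0 + of_real p2) + d*(2*cnj z)"
    and c4: "2*cnj z * b + (of_real p1 + of_real p3) * d = c * (2*z) + d * (of_real p1 + of_real p3)"
  shows "Rm z w x y p0 p1 p2 p3 3 1 - csf (um a b c d) (Rm z w x y p0 p1 p2 p3) 3 1
       = Wm x y (p0-p1-p2+p3) 3 1 - csf (um a b c d) (Wm x y (p0-p1-p2+p3)) 3 1"
  by (simp add: csf_def sum2 Rm_def Wm_def um_def, (insert u1 u2 u3 u4 c1 c2 c3 c4, Groebner_Basis.algebra)?)

lemma t32:
  fixes a b c d z w :: complex and x y p0 p1 p2 p3 :: real
  assumes u1: "a*cnj a + b*cnj b = 1" and u2: "a*cnj c + b*cnj d = 0"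
    and u3: "c*cnj a + d*cnj b = 0" and u4: "c*cnj c + d*cnj d = 1"
    and c1: "(of_real p0 + of_real p2) * a + 2*z*c = a * (of_real p0 + of_real p2) + b*(2*cnj z)"
    and c2: "(of_real p0 + of_real p2) * b + 2*z*d = a*(2*z) + b * (of_real p1 + of_real p3)"
    and c3: "2*cnj z * a + (of_real p1 + of_real p3) * c = c * (of_real p0 + of_real p2) + d*(2*cnj z)"
    and c4: "2*cnj z * b + (of_real p1 + of_real p3) * d = c * (2*z) + d * (of_real p1 + of_real p3)"
  shows "Rm z w x y p0 p1 p2 p3 3 2 - csf (um a b c d) (Rm z w x y p0 p1 p2 p3) 3 2
       = Wm x y (p0-p1-p2+p3) 3 2 - csf (um a b c d) (Wm x y (p0-p1-p2+p3)) 3 2"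
  by (simp add: csf_def sum2 Rm_def Wm_def um_def, (insert u1 u2 u3 u4 c1 c2 c3 c4, Groebner_Basis.algebra)?)

lemma t33:
  fixes a b c d z w :: complex and x y p0 p1 p2 p3 :: real
  assumes u1: "a*cnj a + b*cnj b = 1" and u2: "a*cnj c + b*cnj d = 0"
    and u3: "c*cnj a + d*cnj b = 0" and u4: "c*cnj c + d*cnj d = 1"
    and c1: "(of_real p0 + of_real p2) * a + 2*z*c = a * (of_real p0 + of_real p2) + b*(2*cnj z)"
    and c2: "(of_real p0 + of_real p2) * b + 2*z*d = a*(2*z) + b * (of_real p1 + of_real p3)"
    and c3: "2*cnj z * a + (of_real p1 + of_real p3) * c = c * (of_real p0 + of_real p2) + d*(2*cnj z)"
    and c4: "2*cnj z * b + (of_real p1 + of_real p3) * d = c * (2*z) + d * (of_real p1 + of_real p3)"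
  shows "Rm z w x y p0 p1 p2 p3 3 3 - csf (um a b c d) (Rm z w x y p0 p1 p2 p3) 3 3
       = Wm x y (p0-p1-p2+p3) 3 3 - csf (um a b c d) (Wm x y (p0-p1-p2+p3)) 3 3"
  by (simp add: csf_def sum2 Rm_def Wm_def um_def, (insert u1 u2 u3 u4 c1 c2 c3 c4, Groebner_Basis.algebra)?)

lemma step1:
  fixes a b c d z w :: complex and x y p0 p1 p2 p3 :: real
  assumes u1: "a*cnj a + b*cnj b = 1" and u2: "a*cnj c + b*cnj d = 0"
    and u3: "c*cnj a + d*cnj b = 0" and u4: "c*cnj c + d*cnj d = 1"
    and c1: "(of_real p0 + of_real p2) * a + 2*z*c = a * (of_real p0 + of_real p2) + b*(2*cnj z)"
    and c2: "(of_real p0 + of_real p2) * b + 2*z*d = a*(2*z) + b * (of_real p1 + of_real p3)"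
    and c3: "2*cnj z * a + (of_real p1 + of_real p3) * c = c * (of_real p0 + of_real p2) + d*(2*cnj z)"
    and c4: "2*cnj z * b + (of_real p1 + of_real p3) * d = c * (2*z) + d * (of_real p1 + of_real p3)"
    and ij: "i < 4" "j < 4"
  shows "Rm z w x y p0 p1 p2 p3 i j - csf (um a b c d) (Rm z w x y p0 p1 p2 p3) i j
       = Wm x y (p0-p1-p2+p3) i j - csf (um a b c d) (Wm x y (p0-p1-p2+p3)) i j"
proof -
  have "i = 0 \<or> i = 1 \<or> i = 2 \<or> i = 3" "j = 0 \<or> j = 1 \<or> j = 2 \<or> j = 3" using ij by auto
  thus ?thesis using t00[OF u1 u2 u3 u4 c1 c2 c3 c4] t01[OF u1 u2 u3 u4 c1 c2 c3 c4] t02[OF u1 u2 u3 u4 c1 c2 c3 c4] t03[OF u1 u2 u3 u4 c1 c2 c3 c4] t10[OF u1 u2 u3 u4 c1 c2 c3 c4] t11[OF u1 u2 u3 u4 c1 c2 c3 c4] t12[OF u1 u2 u3 u4 c1 c2 c3 c4] t13[OF u1 u2 u3 u4 c1 c2 c3 c4] t20[OF u1 u2 u3 u4 c1 c2 c3 c4] t21[OF u1 u2 u3 u4 c1 c2 c3 c4] t22[OF u1 u2 u3 u4 c1 c2 c3 c4] t23[OF u1 u2 u3 u4 c1 c2 c3 c4] t30[OF u1 u2 u3 u4 c1 c2 c3 c4] t31[OF u1 u2 u3 u4 c1 c2 c3 c4] t32[OF u1 u2 u3 u4 c1 c2 c3 c4] t33[OF u1 u2 u3 u4 c1 c2 c3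 c4] by auto
qed

lemma col:
  fixes a b c d ca cb cc cd :: complex
  assumes "a*ca + b*cb = 1" "a*cc+b*cd = 0" "c*ca+d*cb=0" "c*cc+d*cd = 1"
  shows "ca*a + cc*c = 1"
  using assms by Groebner_Basis.algebra
lemma col2:
  fixes a b c d ca cb cc cd :: complex
  assumes "a*ca + b*cb = 1" "a*cc+b*cd = 0" "c*ca+d*cb=0" "c*cc+d*cd = 1"
  shows "cb*b + cd*d = 1"
  using assms by Groebner_Basis.algebra
lemma col3:
  fixes a b c d ca cb cc cd :: complex
  assumes "a*ca + b*cb = 1" "a*cc+b*cd = 0" "c*ca+d*cb=0" "c*cc+d*cd = 1"
  shows "ca*b + cc*d = 0"
  using assms by Groebner_Basis.algebra
lemma col4:
  fixes a b c d ca cb cc cd :: complex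
  assumes "a*ca + b*cb = 1" "a*cc+b*cd = 0" "c*ca+d*cb=0" "c*cc+d*cd = 1"
  shows "cb*a + cd*c = 0"
  using assms by Groebner_Basis.algebra

lemma I2:
  fixes a b c d ca cb cc cd x y :: complex
  assumes "a*ca + b*cb = 1" "c*cc+d*cd = 1" "a*cc+b*cd = 0" "ca*c+cb*d=0"
  shows "(a*x*cb + b*y*ca)*(ca*x*b+cb*y*a) + (x - (a*x*cd + b*y*cc))*(x - (ca*x*d+cb*y*c))
   + (y - (c*x*cb + d*y*ca))*(y - (cc*x*b + cd*y*a)) + (c*x*cd + d*y*cc)*(cc*x*d+cd*y*c)
   + (a*y*cb + b*x*ca)*(ca*y*b+cb*x*a) + (y - (a*y*cd + b*x*cc))*(y - (ca*y*d+cb*x*c))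
   + (x - (c*y*cb + d*x*ca))*(x - (cc*y*b + cd*x*a)) + (c*y*cd + d*x*cc)*(cc*y*d+cd*x*c)
  = 2*(x^2+y^2)*(2 - (a*cd+ca*d)) - 4*x*y*(b*cc+cb*c)"
  using assms by Groebner_Basis.algebra
lemma I1:
  fixes a b c d ca cb cc cd t :: complex
  assumes "a*ca + b*cb = 1" "a*cc+b*cd = 0" "c*ca+d*cb=0" "c*cc+d*cd = 1"
   "ca*a + cc*c = 1" "cb*b + cd*d = 1" "ca*b + cc*d = 0" "cb*a + cd*c = 0"
  shows "t*t*((1 - (a*ca - b*cb))*(1 - (ca*a - cb*b)) + (a*cc - b*cd)*(ca*c - cb*d) + (c*ca - d*cb)*(cc*a - cd*b)
    + (-1 - (c*cc - d*cd))*(-1 - (cc*c - cd*d))) = 8*t*t*b*cb"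
  using assms by Groebner_Basis.algebra

lemma step2:
  fixes a b c d :: complex and x y t :: real
  assumes u1: "a*cnj a + b*cnj b = 1" and u2: "a*cnj c + b*cnj d = 0"
    and u3: "c*cnj a + d*cnj b = 0" and u4: "c*cnj c + d*cnj d = 1"
  shows "(\<Sum>i<4. \<Sum>j<4. (cmod (Wm x y t i j - csf (um a b c d) (Wm x y t) i j))^2)
     = t^2 * (cmod b)^2 + 4*(x^2+y^2)*(1 - Re (a * cnj d)) - 8*x*y*Re (b * cnj c)"
proof -
  have u3c: "cnj a * c + cnj b * d = 0" using u3 by (simp add: mult.commute)
  have "complex_of_real (\<Sum>i<4. \<Sum>j<4. (cmod (Wm x y t i j - csf (um a b c d) (Wm x y t) i j))^2)
     = (\<Sum>i<4. \<Sum>j<4. (Wm x y t i j - csf (um a b c d) (Wm x y t) i j) * cnj (Wm x y t i j - csf (um a b c d) (Wm x y t) i j))"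
    by (simp only: of_real_sum complex_norm_square)
  also have "\<dots> = of_real t ^2 * (b * cnj b) + 2*(of_real x^2+of_real y^2)*(2 - (a * cnj d + cnj a * d)) - 4*of_real x*of_real y*(b * cnj c + cnj b * c)"
    apply (simp add: sum4 sum2 csf_def Wm_def um_def field_simps)
    using I1[OF u1 u2 u3 u4 col[OF u1 u2 u3 u4] col2[OF u1 u2 u3 u4] col3[OF u1 u2 u3 u4] col4[OF u1 u2 u3 u4], of "of_real t"]
      I2[OF u1 u4 u2 u3c, of "of_real x" "of_real y"] by Groebner_Basis.algebra
  also have "\<dots> = complex_of_real (t^2 * (cmod b)^2 + 4*(x^2+y^2)*(1 - Re (a * cnj d)) - 8*x*y*Re (b * cnj c))"
  proof -
    have e1: "a * cnj d + cnj a * d = of_real (2 * Re (a * cnj d))" using complex_add_cnj[of "a * cnj d"] by (simp add: mult.commute)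
    have e2: "b * cnj c + cnj b * c = of_real (2 * Re (b * cnj c))" using complex_add_cnj[of "b * cnj c"] by (simp add: mult.commute)
    show ?thesis unfolding e1 e2 complex_norm_square[symmetric] by (simp add: algebra_simps)
  qed
  finally show ?thesis using of_real_eq_iff by blast
qed
lemma LP:
  fixes p q A B x y t :: real
  assumes "p + q = 1" "p \<ge> 0" "q \<ge> 0" "\<bar>A\<bar> \<le> p" "\<bar>B\<bar> \<le> q"
  shows "t^2*q + 4*(x^2+y^2)*(1-A) - 8*x*y*B \<le> (2*x+2*y)^2 + (2*y-2*x)^2 + t^2
           - min ((2*x+2*y)^2) (min ((2*y-2*x)^2) (t^2))"
proof -
  define tx where "tx = (2*x+2*y)^2"
  define ty where "ty = (2*y-2*x)^2"
  define tz where "tz = t^2"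
  define wx where "wx = 1 - A - B"
  define wy where "wy = 1 - A + B"
  define wz where "wz = 2*q"
  have F: "t^2*q + 4*(x^2+y^2)*(1-A) - 8*x*y*B = (tx*wx + ty*wy + tz*wz)/2"
    unfolding tx_def ty_def tz_def wx_def wy_def wz_def by (simp add: algebra_simps power2_eq_square)
  have w: "0 \<le> wx" "wx \<le> 2" "0 \<le> wy" "wy \<le> 2" "0 \<le> wz" "wz \<le> 2" "wx + wy + wz \<le> 4"
    using assms unfolding wx_def wy_def wz_def by (auto simp: abs_le_iff)
  have nn: "0 \<le> tx" "0 \<le> ty" "0 \<le> tz" unfolding tx_def ty_def tz_def by auto
  have key: "(tx*wx + ty*wy + tz*wz)/2 \<le> tx + ty + tz - m"
    if m: "m \<le> tx" "m \<le> ty" "m \<le> tz" "0 \<le> m" for m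
  proof -
    have "(tx - m)*(wx - 2) \<le> 0" "(ty - m)*(wy - 2) \<le> 0" "(tz - m)*(wz - 2) \<le> 0"
         "m * (wx + wy + wz - 4) \<le> 0"
      using m w by (auto intro: mult_nonneg_nonpos)
    hence "(tx - m)*(wx - 2) + (ty - m)*(wy - 2) + (tz - m)*(wz - 2) + m * (wx + wy + wz - 4) \<le> 0"
      by linarith
    moreover have "(tx - m)*(wx - 2) + (ty - m)*(wy - 2) + (tz - m)*(wz - 2) + m * (wx + wy + wz - 4)
       = (tx*wx + ty*wy + tz*wz) - 2*(tx + ty + tz - m)" by (simp add: algebra_simps)
    ultimately have "tx*wx + ty*wy + tz*wz \<le> 2*(tx + ty + tz - m)" by linarith
    thus ?thesis by (simp add: field_simps)
  qed
  have "(tx*wx + ty*wy + tz*wz)/2 \<le> tx + ty + tz - min tx (min ty tz)"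
    by (rule key) (use nn in auto)
  thus ?thesis using F unfolding tx_def ty_def tz_def by simp
qed

lemma kron2_entry: "i < 4 \<Longrightarrow> j < 4 \<Longrightarrow> kron2 A B $$ (i,j) = A $$ (i div 2, j div 2) * B $$ (i mod 2, j mod 2)"
  by (simp add: kron2_def)
lemma kron2_carrier[simp]: "kron2 A B \<in> carrier_mat 4 4" by (simp add: kron2_def)
lemma cadj_carrier[simp]: "U \<in> carrier_mat n m \<Longrightarrow> cadj U \<in> carrier_mat m n" by (simp add: cadj_def)
lemma cadj_dims[simp]: "dim_row (cadj U) = dim_col U" "dim_col (cadj U) = dim_row U" by (simp_all add: cadj_def)
lemma cadj_entry: "U \<in> carrier_mat n m \<Longrightarrow> i < m \<Longrightarrow> j < n \<Longrightarrow> cadj U $$ (i,j) = cnj (U $$ (j,i))"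
  by (simp add: cadj_def)

lemma rho_f_carrier: "rho_f \<rho> U \<in> carrier_mat 4 4"
  unfolding rho_f_def carrier_mat_def by (simp add: kron2_def)

lemma rho_f_entry:
  assumes r: "\<rho> \<in> carrier_mat 4 4" and U: "U \<in> carrier_mat 2 2" and ij: "i < 4" "j < 4"
  shows "rho_f \<rho> U $$ (i,j) = csf (\<lambda>k l. U $$ (k,l)) (\<lambda>k l. \<rho> $$ (k,l)) i j"
proof -
  have "rho_f \<rho> U $$ (i,j) = (\<Sum>l<4. (\<Sum>k<4. kron2 (1\<^sub>m 2) U $$ (i,k) * \<rho> $$ (k,l)) * kron2 (1\<^sub>m 2) (cadj U) $$ (l,j))"
    unfolding rho_f_def using r ij
    by (simp add: scalar_prod_def atLeast0LessThan kron2_def[of "1\<^sub>m 2" "cadj U"] kron2_def[of "1\<^sub>m 2" U] sum_distrib_right)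
  also have "\<dots> = csf (\<lambda>k l. U $$ (k,l)) (\<lambda>k l. \<rho> $$ (k,l)) i j"
  proof -
    have "i = 0 \<or> i = 1 \<or> i = 2 \<or> i = 3" "j = 0 \<or> j = 1 \<or> j = 2 \<or> j = 3" using ij by auto
    thus ?thesis using U
      apply (elim disjE)
      apply (simp_all add: sum4 sum2 csf_def kron2_entry cadj_entry)
      apply (simp_all add: algebra_simps numeral_3_eq_3 numeral_2_eq_2)
      done
  qed
  finally show ?thesis .
qed

lemma kron2_dims[simp]: "dim_row (kron2 A B) = 4" "dim_col (kron2 A B) = 4" by (simp_all add: kron2_def)

lemma corr_entry:
  assumes r: "\<rho> \<in> carrier_mat 4 4" and ij: "i < 3" "j < 3"
  shows "corr_mat \<rho> $$ (i,j) = Re (\<Sum>k<4. \<Sum>l<4. pauli i $$ (k div 2, l div 2) * pauli j $$ (k mod 2, l mod 2) * \<rho> $$ (l,k))"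
proof -
  have "mtrace (kron2 (pauli i) (pauli j) * \<rho>) = (\<Sum>k<4. \<Sum>l<4. pauli i $$ (k div 2, l div 2) * pauli j $$ (k mod 2, l mod 2) * \<rho> $$ (l,k))"
    unfolding mtrace_def using r by (simp add: scalar_prod_def atLeast0LessThan kron2_entry kron2_dims)
  thus ?thesis using ij by (simp add: corr_mat_def)
qed

lemma pauli_entries:
  "pauli 0 $$ (0,0) = 0" "pauli 0 $$ (0,1) = 1" "pauli 0 $$ (1,0) = 1" "pauli 0 $$ (1,1) = 0"
  "pauli 1 $$ (0,0) = 0" "pauli 1 $$ (0,1) = -\<i>" "pauli 1 $$ (1,0) = \<i>" "pauli 1 $$ (1,1) = 0"
  "pauli 2 $$ (0,0) = 1" "pauli 2 $$ (0,1) = 0" "pauli 2 $$ (1,0) = 0" "pauli 2 $$ (1,1) = -1"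
  by (simp_all add: pauli_def mat_of_rows_list_def)

lemma herm_entry:
  assumes "two_qubit_state \<rho>" "i < 4" "j < 4"
  shows "\<rho> $$ (i,j) = cnj (\<rho> $$ (j,i))"
proof -
  have r: "\<rho> \<in> carrier_mat 4 4" "cadj \<rho> = \<rho>" using assms(1) unfolding two_qubit_state_def by auto
  have "cadj \<rho> $$ (i,j) = cnj (\<rho> $$ (j,i))" using r(1) assms by (simp add: cadj_def)
  thus ?thesis using r(2) by simp
qed

lemma corr_vals:
  assumes st: "two_qubit_state \<rho>"
  shows "corr_mat \<rho> $$ (0,0) = 2 * Re (\<rho> $$ (0,3)) + 2 * Re (\<rho> $$ (1,2))"
    "corr_mat \<rho> $$ (0,1) = 2 * Im (\<rho> $$ (1,2)) - 2 * Im (\<rho> $$ (0,3))"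
    "corr_mat \<rho> $$ (0,2) = 2 * Re (\<rho> $$ (0,2)) - 2 * Re (\<rho> $$ (1,3))"
    "corr_mat \<rho> $$ (1,0) = - 2 * Im (\<rho> $$ (0,3)) - 2 * Im (\<rho> $$ (1,2))"
    "corr_mat \<rho> $$ (1,1) = 2 * Re (\<rho> $$ (1,2)) - 2 * Re (\<rho> $$ (0,3))"
    "corr_mat \<rho> $$ (1,2) = 2 * Im (\<rho> $$ (1,3)) - 2 * Im (\<rho> $$ (0,2))"
    "corr_mat \<rho> $$ (2,0) = 2 * Re (\<rho> $$ (0,1)) - 2 * Re (\<rho> $$ (2,3))"
    "corr_mat \<rho> $$ (2,1) = 2 * Im (\<rho> $$ (2,3)) - 2 * Im (\<rho> $$ (0,1))"
    "corr_mat \<rho> $$ (2,2) = Re (\<rho> $$ (0,0)) - Re (\<rho> $$ (1,1)) - Re (\<rho> $$ (2,2)) + Re (\<rho> $$ (3,3))"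
proof -
  have r: "\<rho> \<in> carrier_mat 4 4" using st unfolding two_qubit_state_def by auto
  have h: "\<rho> $$ (1,0) = cnj (\<rho> $$ (0,1))" "\<rho> $$ (2,0) = cnj (\<rho> $$ (0,2))" "\<rho> $$ (3,0) = cnj (\<rho> $$ (0,3))"
     "\<rho> $$ (2,1) = cnj (\<rho> $$ (1,2))" "\<rho> $$ (3,1) = cnj (\<rho> $$ (1,3))" "\<rho> $$ (3,2) = cnj (\<rho> $$ (2,3))"
    using herm_entry[OF st, of 1 0] herm_entry[OF st, of 2 0] herm_entry[OF st, of 3 0]
      herm_entry[OF st, of 2 1] herm_entry[OF st, of 3 1] herm_entry[OF st, of 3 2] by simp_all
  note ce = corr_entry[OF r]
  show "corr_mat \<rho> $$ (0,0) = 2 * Re (\<rho> $$ (0,3)) + 2 * Re (\<rho> $$ (1,2))"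
    by (simp add: ce sum4 pauli_def mat_of_rows_list_def h[unfolded One_nat_def] One_nat_def)
  show "corr_mat \<rho> $$ (0,1) = 2 * Im (\<rho> $$ (1,2)) - 2 * Im (\<rho> $$ (0,3))"
    by (simp add: ce sum4 pauli_def mat_of_rows_list_def h[unfolded One_nat_def] One_nat_def)
  show "corr_mat \<rho> $$ (0,2) = 2 * Re (\<rho> $$ (0,2)) - 2 * Re (\<rho> $$ (1,3))"
    by (simp add: ce sum4 pauli_def mat_of_rows_list_def h[unfolded One_nat_def] One_nat_def)
  show "corr_mat \<rho> $$ (1,0) = - 2 * Im (\<rho> $$ (0,3)) - 2 * Im (\<rho> $$ (1,2))"
    by (simp add: ce sum4 pauli_def mat_of_rows_list_def h[unfolded One_nat_def] One_nat_def)
  show "corr_mat \<rho> $$ (1,1) = 2 * Re (\<rho> $$ (1,2)) - 2 * Re (\<rho> $$ (0,3))"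
    by (simp add: ce sum4 pauli_def mat_of_rows_list_def h[unfolded One_nat_def] One_nat_def)
  show "corr_mat \<rho> $$ (1,2) = 2 * Im (\<rho> $$ (1,3)) - 2 * Im (\<rho> $$ (0,2))"
    by (simp add: ce sum4 pauli_def mat_of_rows_list_def h[unfolded One_nat_def] One_nat_def)
  show "corr_mat \<rho> $$ (2,0) = 2 * Re (\<rho> $$ (0,1)) - 2 * Re (\<rho> $$ (2,3))"
    by (simp add: ce sum4 pauli_def mat_of_rows_list_def h[unfolded One_nat_def] One_nat_def)
  show "corr_mat \<rho> $$ (2,1) = 2 * Im (\<rho> $$ (2,3)) - 2 * Im (\<rho> $$ (0,1))"
    by (simp add: ce sum4 pauli_def mat_of_rows_list_def h[unfolded One_nat_def] One_nat_def)
  show "corr_mat \<rho> $$ (2,2) = Re (\<rho> $$ (0,0)) - Re (\<rho> $$ (1,1)) - Re (\<rho> $$ (2,2)) + Re (\<rho> $$ (3,3))"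
    by (simp add: ce sum4 pauli_def mat_of_rows_list_def h[unfolded One_nat_def] One_nat_def)
qed

lemma unitary_eqs:
  assumes "unitary2 U"
  shows "U$$(0,0)*cnj(U$$(0,0)) + U$$(0,1)*cnj(U$$(0,1)) = 1"
    "U$$(0,0)*cnj(U$$(1,0)) + U$$(0,1)*cnj(U$$(1,1)) = 0"
    "U$$(1,0)*cnj(U$$(0,0)) + U$$(1,1)*cnj(U$$(0,1)) = 0"
    "U$$(1,0)*cnj(U$$(1,0)) + U$$(1,1)*cnj(U$$(1,1)) = 1"
proof -
  have U: "U \<in> carrier_mat 2 2" and eq: "U * cadj U = 1\<^sub>m 2" using assms unfolding unitary2_def by auto
  have e: "(U * cadj U) $$ (i,j) = (\<Sum>k<2. U $$ (i,k) * cnj (U $$ (j,k)))" if "i < 2" "j < 2" for i j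
    using U that by (simp add: scalar_prod_def atLeast0LessThan cadj_entry)
  have f: "(U * cadj U) $$ (i,j) = 1\<^sub>m 2 $$ (i,j)" for i j using eq by simp
  show "U$$(0,0)*cnj(U$$(0,0)) + U$$(0,1)*cnj(U$$(0,1)) = 1" using e[of 0 0] f[of 0 0] by (simp add: sum2)
  show "U$$(0,0)*cnj(U$$(1,0)) + U$$(0,1)*cnj(U$$(1,1)) = 0" using e[of 0 1] f[of 0 1] by (simp add: sum2)
  show "U$$(1,0)*cnj(U$$(0,0)) + U$$(1,1)*cnj(U$$(0,1)) = 0" using e[of 1 0] f[of 1 0] by (simp add: sum2)
  show "U$$(1,0)*cnj(U$$(1,0)) + U$$(1,1)*cnj(U$$(1,1)) = 1" using e[of 1 1] f[of 1 1] by (simp add: sum2)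
qed

lemma cyc_eqs:
  assumes r: "\<rho> \<in> carrier_mat 4 4" and U: "U \<in> carrier_mat 2 2" and cy: "ptrace_A \<rho> * U = U * ptrace_A \<rho>"
  shows "(\<rho>$$(0,0) + \<rho>$$(2,2)) * U$$(0,0) + (\<rho>$$(0,1) + \<rho>$$(2,3)) * U$$(1,0) = U$$(0,0) * (\<rho>$$(0,0) + \<rho>$$(2,2)) + U$$(0,1) * (\<rho>$$(1,0) + \<rho>$$(3,2))"
    "(\<rho>$$(0,0) + \<rho>$$(2,2)) * U$$(0,1) + (\<rho>$$(0,1) + \<rho>$$(2,3)) * U$$(1,1) = U$$(0,0) * (\<rho>$$(0,1) + \<rho>$$(2,3)) + U$$(0,1) * (\<rho>$$(1,1) + \<rho>$$(3,3))"
    "(\<rho>$$(1,0) + \<rho>$$(3,2)) * U$$(0,0) + (\<rho>$$(1,1) + \<rho>$$(3,3)) * U$$(1,0) = U$$(1,0) * (\<rho>$$(0,0) + \<rho>$$(2,2)) + U$$(1,1) * (\<rho>$$(1,0) + \<rho>$$(3,2))"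
    "(\<rho>$$(1,0) + \<rho>$$(3,2)) * U$$(0,1) + (\<rho>$$(1,1) + \<rho>$$(3,3)) * U$$(1,1) = U$$(1,0) * (\<rho>$$(0,1) + \<rho>$$(2,3)) + U$$(1,1) * (\<rho>$$(1,1) + \<rho>$$(3,3))"
proof -
  have P: "ptrace_A \<rho> \<in> carrier_mat 2 2" by (simp add: ptrace_A_def)
  have pe: "ptrace_A \<rho> $$ (0,0) = \<rho> $$ (0,0) + \<rho> $$ (2,2)" "ptrace_A \<rho> $$ (0,1) = \<rho> $$ (0,1) + \<rho> $$ (2,3)"
    "ptrace_A \<rho> $$ (1,0) = \<rho> $$ (1,0) + \<rho> $$ (3,2)" "ptrace_A \<rho> $$ (1,1) = \<rho> $$ (1,1) + \<rho> $$ (3,3)"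
    by (simp_all add: ptrace_A_def sum2 numeral_3_eq_3 numeral_2_eq_2)
  have e1: "(ptrace_A \<rho> * U) $$ (i,j) = (\<Sum>k<2. ptrace_A \<rho> $$ (i,k) * U $$ (k,j))" if "i < 2" "j < 2" for i j
    using U P that by (simp add: scalar_prod_def atLeast0LessThan)
  have e2: "(U * ptrace_A \<rho>) $$ (i,j) = (\<Sum>k<2. U $$ (i,k) * ptrace_A \<rho> $$ (k,j))" if "i < 2" "j < 2" for i j
    using U P that by (simp add: scalar_prod_def atLeast0LessThan)
  have f: "(ptrace_A \<rho> * U) $$ (i,j) = (U * ptrace_A \<rho>) $$ (i,j)" for i j using cy by simp
  show "(\<rho>$$(0,0) + \<rho>$$(2,2)) * U$$(0,0) + (\<rho>$$(0,1) + \<rho>$$(2,3)) * U$$(1,0) = U$$(0,0) * (\<rho>$$(0,0) + \<rho>$$(2,2)) + U$$(0,1) * (\<rho>$$(1,0) + \<rho>$$(3,2))"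
    using f[of 0 0] e1[of 0 0] e2[of 0 0] by (simp add: sum2 pe pe[unfolded One_nat_def])
  show "(\<rho>$$(0,0) + \<rho>$$(2,2)) * U$$(0,1) + (\<rho>$$(0,1) + \<rho>$$(2,3)) * U$$(1,1) = U$$(0,0) * (\<rho>$$(0,1) + \<rho>$$(2,3)) + U$$(0,1) * (\<rho>$$(1,1) + \<rho>$$(3,3))"
    using f[of 0 1] e1[of 0 1] e2[of 0 1] by (simp add: sum2 pe pe[unfolded One_nat_def])
  show "(\<rho>$$(1,0) + \<rho>$$(3,2)) * U$$(0,0) + (\<rho>$$(1,1) + \<rho>$$(3,3)) * U$$(1,0) = U$$(1,0) * (\<rho>$$(0,0) + \<rho>$$(2,2)) + U$$(1,1) * (\<rho>$$(1,0) + \<rho>$$(3,2))"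
    using f[of 1 0] e1[of 1 0] e2[of 1 0] by (simp add: sum2 pe pe[unfolded One_nat_def])
  show "(\<rho>$$(1,0) + \<rho>$$(3,2)) * U$$(0,1) + (\<rho>$$(1,1) + \<rho>$$(3,3)) * U$$(1,1) = U$$(1,0) * (\<rho>$$(0,1) + \<rho>$$(2,3)) + U$$(1,1) * (\<rho>$$(1,1) + \<rho>$$(3,3))"
    using f[of 1 1] e1[of 1 1] e2[of 1 1] by (simp add: sum2 pe pe[unfolded One_nat_def])
qed

lemma csf_cong:
  assumes "i < 4" "j < 4" "\<And>k l. k < 2 \<Longrightarrow> l < 2 \<Longrightarrow> u k l = u' k l"
    "\<And>k l. k < 4 \<Longrightarrow> l < 4 \<Longrightarrow> R k l = R' k l"
  shows "csf u R i j = csf u' R' i j"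
proof -
  have "i div 2 < 2" "j div 2 < 2" using assms by auto
  hence "2 * (i div 2) + k < 4" "2 * (j div 2) + k < 4" if "k < 2" for k using that by linarith+
  thus ?thesis unfolding csf_def using assms by (auto intro!: sum.cong)
qed




lemma main_F2:
  assumes st: "two_qubit_state \<rho>" and dg: "is_diagonal (corr_mat \<rho>)" and un: "unitary2 U"
    and cy: "ptrace_A \<rho> * U = U * ptrace_A \<rho>"
  shows "(frob_norm (\<rho> - rho_f \<rho> U))^2 = (corr_mat \<rho> $$ (2,2))^2 * (cmod (U$$(0,1)))^2
      + 4*((Re (\<rho>$$(0,3)))^2 + (Re (\<rho>$$(1,2)))^2)*(1 - Re (U$$(0,0) * cnj (U$$(1,1))))
      - 8*Re (\<rho>$$(0,3))*Re (\<rho>$$(1,2))*Re (U$$(0,1) * cnj (U$$(1,0)))"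
proof -
  have r: "\<rho> \<in> carrier_mat 4 4" using st unfolding two_qubit_state_def by auto
  have U: "U \<in> carrier_mat 2 2" using un unfolding unitary2_def by auto
  have T0: "corr_mat \<rho> $$ (i,j) = 0" if "i < 3" "j < 3" "i \<noteq> j" for i j
    using dg that unfolding is_diagonal_def by (simp add: corr_mat_def)
  note cv = corr_vals[OF st]
  have i03: "Im (\<rho>$$(0,3)) = 0" and i12: "Im (\<rho>$$(1,2)) = 0"
    using T0[of 0 1] T0[of 1 0] cv(2) cv(4) by auto
  have e13: "\<rho>$$(1,3) = \<rho>$$(0,2)"
    using T0[of 0 2] T0[of 1 2] cv(3) cv(6) by (auto intro: complex_eqI)
  have e23: "\<rho>$$(2,3) = \<rho>$$(0,1)"
    using T0[of 2 0] T0[of 2 1] cv(7) cv(8) by (auto intro: complex_eqI)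
  have hd: "\<rho>$$(k,k) = of_real (Re (\<rho>$$(k,k)))" if "k < 4" for k
  proof -
    have "\<rho>$$(k,k) = cnj (\<rho>$$(k,k))" using herm_entry[OF st that that] .
    hence "Im (\<rho>$$(k,k)) = Im (cnj (\<rho>$$(k,k)))" by simp
    hence "Im (\<rho>$$(k,k)) = 0" by simp
    thus ?thesis by (simp add: complex_eq_iff)
  qed
  define z where "z = \<rho>$$(0,1)"
  define w where "w = \<rho>$$(0,2)"
  define x where "x = Re (\<rho>$$(0,3))"
  define y where "y = Re (\<rho>$$(1,2))"
  define p0 where "p0 = Re (\<rho>$$(0,0))"
  define p1 where "p1 = Re (\<rho>$$(1,1))"
  define p2 where "p2 = Re (\<rho>$$(2,2))"
  define p3 where "p3 = Re (\<rho>$$(3,3))"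
  define a where "a = U$$(0,0)"
  define b where "b = U$$(0,1)"
  define c where "c = U$$(1,0)"
  define d where "d = U$$(1,1)"
  have x: "\<rho>$$(0,3) = of_real x" unfolding x_def using i03 by (simp add: complex_eq_iff)
  have y: "\<rho>$$(1,2) = of_real y" unfolding y_def using i12 by (simp add: complex_eq_iff)
  have ps: "\<rho>$$(0,0) = of_real p0" "\<rho>$$(1,1) = of_real p1" "\<rho>$$(2,2) = of_real p2" "\<rho>$$(3,3) = of_real p3"
    unfolding p0_def p1_def p2_def p3_def by (rule hd, simp)+
  have hl: "\<rho> $$ (1,0) = cnj (\<rho> $$ (0,1))" "\<rho> $$ (2,0) = cnj (\<rho> $$ (0,2))" "\<rho> $$ (3,0) = cnj (\<rho> $$ (0,3))"
     "\<rho> $$ (2,1) = cnj (\<rho> $$ (1,2))" "\<rho> $$ (3,1) = cnj (\<rho> $$ (1,3))" "\<rho> $$ (3,2) = cnj (\<rho> $$ (2,3))"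
    using herm_entry[OF st, of 1 0] herm_entry[OF st, of 2 0] herm_entry[OF st, of 3 0]
      herm_entry[OF st, of 2 1] herm_entry[OF st, of 3 1] herm_entry[OF st, of 3 2] by simp_all
  have RR: "\<rho> $$ (k,l) = Rm z w x y p0 p1 p2 p3 k l" if "k < 4" "l < 4" for k l
  proof -
    have "k = 0 \<or> k = 1 \<or> k = 2 \<or> k = 3" "l = 0 \<or> l = 1 \<or> l = 2 \<or> l = 3" using that by auto
    thus ?thesis unfolding z_def w_def by (elim disjE) (simp_all only: Rm_def hl ps x y e13 e23, simp_all)
  qed
  have UU: "U $$ (k,l) = um a b c d k l" if "k < 2" "l < 2" for k l
  proof -
    have "k = 0 \<or> k = 1" "l = 0 \<or> l = 1" using that by auto
    thus ?thesis by (elim disjE) (simp_all add: um_def a_def b_def c_def d_def)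
  qed
  note ue = unitary_eqs[OF un, folded a_def b_def c_def d_def]
  note ce = cyc_eqs[OF r U cy, folded a_def b_def c_def d_def]
  have sz: "\<rho>$$(0,1) = z" "\<rho>$$(2,3) = z" "\<rho>$$(1,0) = cnj z" "\<rho>$$(3,2) = cnj z"
    using hl e23 unfolding z_def by simp_all
  have c1: "(of_real p0 + of_real p2) * a + 2*z*c = a * (of_real p0 + of_real p2) + b*(2*cnj z)"
    using ce(1)[unfolded sz ps] by Groebner_Basis.algebra
  have c2: "(of_real p0 + of_real p2) * b + 2*z*d = a*(2*z) + b * (of_real p1 + of_real p3)"
    using ce(2)[unfolded sz ps] by Groebner_Basis.algebra
  have c3: "2*cnj z * a + (of_real p1 + of_real p3) * c = c * (of_real p0 + of_real p2) + d*(2*cnj z)"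
    using ce(3)[unfolded sz ps] by Groebner_Basis.algebra
  have c4: "2*cnj z * b + (of_real p1 + of_real p3) * d = c * (2*z) + d * (of_real p1 + of_real p3)"
    using ce(4)[unfolded sz ps] by Groebner_Basis.algebra
  have D: "(\<rho> - rho_f \<rho> U) $$ (i,j) = Wm x y (p0-p1-p2+p3) i j - csf (um a b c d) (Wm x y (p0-p1-p2+p3)) i j"
    if "i < 4" "j < 4" for i j
  proof -
    have "(\<rho> - rho_f \<rho> U) $$ (i,j) = \<rho> $$ (i,j) - rho_f \<rho> U $$ (i,j)"
      using that rho_f_carrier[of \<rho> U] by simp
    also have "\<dots> = Rm z w x y p0 p1 p2 p3 i j - csf (um a b c d) (Rm z w x y p0 p1 p2 p3) i j"
    proof -
      have "csf (\<lambda>k l. U $$ (k,l)) (\<lambda>k l. \<rho> $$ (k,l)) i j = csf (um a b c d) (Rm z w x y p0 p1 p2 p3) i j"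
        by (rule csf_cong[OF that]) (simp_all add: UU RR)
      thus ?thesis using rho_f_entry[OF r U that] RR[OF that] by simp
    qed
    also have "\<dots> = Wm x y (p0-p1-p2+p3) i j - csf (um a b c d) (Wm x y (p0-p1-p2+p3)) i j"
      by (rule step1[OF ue c1 c2 c3 c4 that])
    finally show ?thesis .
  qed
  have dims: "dim_row (\<rho> - rho_f \<rho> U) = 4" "dim_col (\<rho> - rho_f \<rho> U) = 4"
    using rho_f_carrier[of \<rho> U] by auto
  have "(frob_norm (\<rho> - rho_f \<rho> U))^2 = (\<Sum>i<4. \<Sum>j<4. (cmod ((\<rho> - rho_f \<rho> U) $$ (i,j)))^2)"
    unfolding frob_norm_def dims by (simp add: sum_nonneg)
  also have "\<dots> = (\<Sum>i<4. \<Sum>j<4. (cmod (Wm x y (p0-p1-p2+p3) i j - csf (um a b c d) (Wm x y (p0-p1-p2+p3)) i j))^2)"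
    by (intro sum.cong refl) (simp add: D)
  also have "\<dots> = (p0-p1-p2+p3)^2 * (cmod b)^2 + 4*(x^2+y^2)*(1 - Re (a * cnj d)) - 8*x*y*Re (b * cnj c)"
    by (rule step2[OF ue])
  finally have F: "(frob_norm (\<rho> - rho_f \<rho> U))^2 = (p0-p1-p2+p3)^2 * (cmod b)^2 + 4*(x^2+y^2)*(1 - Re (a * cnj d)) - 8*x*y*Re (b * cnj c)" .
  have t: "corr_mat \<rho> $$ (2,2) = p0-p1-p2+p3" using cv(9) unfolding p0_def p1_def p2_def p3_def .
  show ?thesis unfolding t x_def[symmetric] y_def[symmetric] a_def[symmetric] b_def[symmetric] c_def[symmetric] d_def[symmetric]
    by (rule F)
qed
lemma unit_facts:
  assumes un: "unitary2 U"
  shows "(cmod (U$$(0,0)))^2 + (cmod (U$$(0,1)))^2 = 1"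
    "\<bar>Re (U$$(0,0) * cnj (U$$(1,1)))\<bar> \<le> (cmod (U$$(0,0)))^2"
    "\<bar>Re (U$$(0,1) * cnj (U$$(1,0)))\<bar> \<le> (cmod (U$$(0,1)))^2"
proof -
  define a where "a = U$$(0,0)"
  define b where "b = U$$(0,1)"
  define c where "c = U$$(1,0)"
  define d where "d = U$$(1,1)"
  note ue = unitary_eqs[OF un, folded a_def b_def c_def d_def]
  have dd: "d * cnj d = a * cnj a" using ue by Groebner_Basis.algebra
  have cc: "c * cnj c = b * cnj b" using ue by Groebner_Basis.algebra
  have "complex_of_real ((cmod a)^2) + complex_of_real ((cmod b)^2) = 1"
    using ue(1) by (simp only: complex_norm_square)
  hence "complex_of_real ((cmod a)^2 + (cmod b)^2) = 1" by (simp only: of_real_add)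
  thus "(cmod (U$$(0,0)))^2 + (cmod (U$$(0,1)))^2 = 1" unfolding a_def b_def
    by (metis of_real_eq_1_iff)
  have "complex_of_real ((cmod d)^2) = complex_of_real ((cmod a)^2)"
    by (simp only: complex_norm_square dd)
  hence "(cmod d)^2 = (cmod a)^2" by (metis of_real_eq_iff)
  hence md: "cmod d = cmod a" by (simp add: power2_eq_iff_nonneg)
  have "complex_of_real ((cmod c)^2) = complex_of_real ((cmod b)^2)"
    by (simp only: complex_norm_square cc)
  hence "(cmod c)^2 = (cmod b)^2" by (metis of_real_eq_iff)
  hence mc: "cmod c = cmod b" by (simp add: power2_eq_iff_nonneg)
  have "\<bar>Re (a * cnj d)\<bar> \<le> cmod (a * cnj d)" by (rule abs_Re_le_cmod)
  also have "\<dots> = (cmod a)^2" by (simp add: norm_mult md power2_eq_square)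
  finally show "\<bar>Re (U$$(0,0) * cnj (U$$(1,1)))\<bar> \<le> (cmod (U$$(0,0)))^2" unfolding a_def d_def .
  have "\<bar>Re (b * cnj c)\<bar> \<le> cmod (b * cnj c)" by (rule abs_Re_le_cmod)
  also have "\<dots> = (cmod b)^2" by (simp add: norm_mult mc power2_eq_square)
  finally show "\<bar>Re (U$$(0,1) * cnj (U$$(1,0)))\<bar> \<le> (cmod (U$$(0,1)))^2" unfolding b_def c_def .
qed

lemma dist_sq:
  "(dist_cyc \<rho> U)^2 = (frob_norm (\<rho> - rho_f \<rho> U))^2 / 2"
  unfolding dist_cyc_def by (simp add: power_divide)

lemma dist_bound:
  assumes st: "two_qubit_state \<rho>" and dg: "is_diagonal (corr_mat \<rho>)" and un: "unitary2 U"
    and cy: "ptrace_A \<rho> * U = U * ptrace_A \<rho>"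
  shows "dist_cyc \<rho> U \<le> sqrt (M_val \<rho>) / sqrt 2"
proof -
  note uf = unit_facts[OF un]
  have "(frob_norm (\<rho> - rho_f \<rho> U))^2 \<le> M_val \<rho>"
    unfolding main_F2[OF st dg un cy] M_val_diag[OF dg] corr_vals(1,5)[OF st]
    by (rule LP[where p = "(cmod (U$$(0,0)))^2" and q = "(cmod (U$$(0,1)))^2"
          and A = "Re (U$$(0,0) * cnj (U$$(1,1)))" and B = "Re (U$$(0,1) * cnj (U$$(1,0)))"
          and x = "Re (\<rho>$$(0,3))" and y = "Re (\<rho>$$(1,2))" and t = "corr_mat \<rho> $$ (2,2)"])
       (use uf in auto)
  hence "frob_norm (\<rho> - rho_f \<rho> U) \<le> sqrt (M_val \<rho>)" by (rule real_le_rsqrt)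
  thus ?thesis unfolding dist_cyc_def by (simp add: divide_right_mono)
qed

lemma one_unitary: "unitary2 (1\<^sub>m 2)"
proof -
  have "cadj (1\<^sub>m 2) = (1\<^sub>m 2 :: complex mat)" by (rule eq_matI) (auto simp: cadj_def)
  thus ?thesis unfolding unitary2_def by simp
qed

lemma one_cyclic: "ptrace_A \<rho> * 1\<^sub>m 2 = 1\<^sub>m 2 * ptrace_A \<rho>"
proof -
  have "ptrace_A \<rho> \<in> carrier_mat 2 2" by (simp add: ptrace_A_def)
  thus ?thesis by simp
qed

lemma part1:
  assumes st: "two_qubit_state \<rho>" and dg: "is_diagonal (corr_mat \<rho>)" and gt: "d_max \<rho> > 1 / sqrt 2"
  shows "M_val \<rho> > 1"
proof -
  define S where "S = {dist_cyc \<rho> U | U. unitary2 U \<and> ptrace_A \<rho> * U = U * ptrace_A \<rho>}"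
  have ne: "S \<noteq> {}" unfolding S_def using one_unitary one_cyclic by blast
  have "Sup S \<le> sqrt (M_val \<rho>) / sqrt 2"
    by (rule cSup_least[OF ne]) (auto simp: S_def intro: dist_bound[OF st dg])
  hence "1 / sqrt 2 < sqrt (M_val \<rho>) / sqrt 2" using gt unfolding d_max_def S_def[symmetric] by linarith
  hence "1 < sqrt (M_val \<rho>)" by (simp add: divide_less_cancel)
  thus ?thesis by (metis real_sqrt_gt_1_iff)
qed

definition rho0 :: "complex mat" where
  "rho0 = mat 4 4 (\<lambda>(i,j). if i = 0 \<and> j = 0 then 3/4 else if i = 3 \<and> j = 3 then 1/4
      else if (i = 0 \<and> j = 3) \<or> (i = 3 \<and> j = 0) then 1/4 else 0)"

lemma rho0_carrier: "rho0 \<in> carrier_mat 4 4" by (simp add: rho0_def)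

lemma rho0_entry: "i < 4 \<Longrightarrow> j < 4 \<Longrightarrow> rho0 $$ (i,j) = (if i = 0 \<and> j = 0 then 3/4 else if i = 3 \<and> j = 3 then 1/4
      else if (i = 0 \<and> j = 3) \<or> (i = 3 \<and> j = 0) then 1/4 else 0)"
  by (simp add: rho0_def)

lemma rho0_state: "two_qubit_state rho0"
proof -
  have c: "rho0 \<in> carrier_mat 4 4" by (rule rho0_carrier)
  have h: "cadj rho0 = rho0"
  proof (rule eq_matI)
    fix i j assume ij: "i < dim_row rho0" "j < dim_col rho0"
    hence "i < 4" "j < 4" using c by auto
    thus "cadj rho0 $$ (i, j) = rho0 $$ (i, j)" using c by (simp add: cadj_entry rho0_entry)
  qed (use c in auto)
  have p: "0 \<le> Re (conjugate v \<bullet> (rho0 *\<^sub>v v))" if v: "v \<in> carrier_vec 4" for v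
  proof -
    have "Re (conjugate v \<bullet> (rho0 *\<^sub>v v)) = (1/2)*((Re (v$0))^2 + (Im (v$0))^2) + (1/4)*((Re (v$0) + Re (v$3))^2 + (Im (v$0) + Im (v$3))^2)"
      using v c by (simp add: scalar_prod_def atLeast0LessThan sum4 rho0_entry algebra_simps power2_eq_square, (simp add: field_simps)?)
    also have "\<dots> \<ge> 0" by simp
    finally show ?thesis .
  qed
  have t: "mtrace rho0 = 1" using c by (simp add: mtrace_def sum4 rho0_entry)
  show ?thesis unfolding two_qubit_state_def using c h p t by auto
qed

lemma rho0_corr:
  "corr_mat rho0 $$ (0,0) = 1/2" "corr_mat rho0 $$ (1,1) = -1/2" "corr_mat rho0 $$ (2,2) = 1"
  "corr_mat rho0 $$ (0,1) = 0" "corr_mat rho0 $$ (0,2) = 0" "corr_mat rho0 $$ (1,0) = 0"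
  "corr_mat rho0 $$ (1,2) = 0" "corr_mat rho0 $$ (2,0) = 0" "corr_mat rho0 $$ (2,1) = 0"
  using corr_vals[OF rho0_state] by (simp_all add: rho0_entry)

lemma rho0_diag: "is_diagonal (corr_mat rho0)"
proof -
  have d: "dim_row (corr_mat rho0) = 3" "dim_col (corr_mat rho0) = 3" by (simp_all add: corr_mat_def)
  show ?thesis unfolding is_diagonal_def d
  proof (intro allI impI)
    fix i j :: nat assume "i < 3" "j < 3" "i \<noteq> j"
    hence "(i = 0 \<and> j = 1) \<or> (i = 0 \<and> j = 2) \<or> (i = 1 \<and> j = 0) \<or> (i = 1 \<and> j = 2) \<or> (i = 2 \<and> j = 0) \<or> (i = 2 \<and> j = 1)"
      by auto
    thus "corr_mat rho0 $$ (i, j) = 0" using rho0_corr by auto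
  qed
qed

lemma rho0_M: "M_val rho0 = 5/4"
  unfolding M_val_diag[OF rho0_diag] rho0_corr by (simp add: power2_eq_square)

lemma rho0_dist:
  assumes un: "unitary2 U" and cy: "ptrace_A rho0 * U = U * ptrace_A rho0"
  shows "dist_cyc rho0 U \<le> 1 / sqrt 2"
proof -
  have U: "U \<in> carrier_mat 2 2" using un unfolding unitary2_def by auto
  have "(3/4) * U$$(0,1) = U$$(0,1) * (1/4)"
    using cyc_eqs(2)[OF rho0_carrier U cy] by (simp add: rho0_entry)
  hence b0: "U$$(0,1) = 0" by simp
  note uf = unit_facts[OF un]
  have a1: "(cmod (U$$(0,0)))^2 = 1" using uf(1) b0 by simp
  have F: "(frob_norm (rho0 - rho_f rho0 U))^2 = (1/4) * (1 - Re (U$$(0,0) * cnj (U$$(1,1))))"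
    using main_F2[OF rho0_state rho0_diag un cy] b0 by (simp add: rho0_corr rho0_entry power2_eq_square)
  have "\<bar>Re (U$$(0,0) * cnj (U$$(1,1)))\<bar> \<le> 1" using uf(2) a1 by simp
  hence "(frob_norm (rho0 - rho_f rho0 U))^2 \<le> 1/2" unfolding F by (simp add: abs_le_iff)
  hence "(dist_cyc rho0 U)^2 \<le> 1/4" unfolding dist_sq by simp
  hence "(dist_cyc rho0 U)^2 \<le> (1/2)^2" by (simp add: power2_eq_square)
  hence "dist_cyc rho0 U \<le> 1/2"
    by (rule power2_le_imp_le) simp
  also have "1/2 \<le> 1 / sqrt 2"
  proof -
    have "sqrt 2 \<le> 2" by (rule real_sqrt_le_iff[THEN iffD2, of 2 4, simplified]) 
    thus ?thesis by (simp add: divide_simps)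
  qed
  finally show ?thesis .
qed

lemma part2: "two_qubit_state rho0 \<and> is_diagonal (corr_mat rho0) \<and> M_val rho0 > 1 \<and> d_max rho0 \<le> 1 / sqrt 2"
proof -
  define S where "S = {dist_cyc rho0 U | U. unitary2 U \<and> ptrace_A rho0 * U = U * ptrace_A rho0}"
  have ne: "S \<noteq> {}" unfolding S_def using one_unitary one_cyclic by blast
  have "Sup S \<le> 1 / sqrt 2"
    by (rule cSup_least[OF ne]) (auto simp: S_def intro: rho0_dist)
  thus ?thesis using rho0_state rho0_diag rho0_M unfolding d_max_def S_def by simp
qed

theorem theorem3:
  shows "(\<forall>\<rho>. two_qubit_state \<rho> \<and> is_diagonal (corr_mat \<rho>) \<and> d_max \<rho> > 1 / sqrt 2
            \<longrightarrow> M_val \<rho> > 1)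
       \<and> (\<exists>\<rho>. two_qubit_state \<rho> \<and> is_diagonal (corr_mat \<rho>) \<and> M_val \<rho> > 1
            \<and> d_max \<rho> \<le> 1 / sqrt 2)"
  using part1 part2 by blast


end
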